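(* Let $n$ be a positive integer, $p\ge5$ a prime number, $I$ an infinite set, and $R=\prod_{i\in I}\mathbb Z/np^2\mathbb Z$. There exists a $2\times3$ matrix with entries in $R$ that is partition regular over $R$ but does not satisfy the generalised columns condition.
   Context: A $k\times l$ matrix $\mathbf A$ over $R$ is partition regular over $R$ if for every $r\ge1$ and every map $\chi\colon R\to\{1,\dots,r\}$ there is a nonzero $\mathbf x\in R^l$ with $\mathbf A\mathbf x=0$ and all entries of $\mathbf x$ of the same colour. With columns $\mathbf c_1,\dots,\mathbf c_l$, $\mathbf A$ satisfies the generalised columns condition if there exist $m\ge0$, a partition $\{1,\dots,l\}=I_0\cup\dots\cup I_m$ and $d_0,\dots,d_m\in R\setminus\{0\}$ with (i) $d_0\sum_{i\in I_0}\mathbf c_i=0$; (ii) for $1\le t\le m$, $d_t\sum_{i\in I_t}\mathbf c_i$ lies in the $R$-submodule generated by the $\mathbf c_j$ with $j\in I_0\cup\dots\cup I_{t-1}$; (iii) if $m>0$, the ideal $d_0(d_1\cdots d_m)^nR$ is infinite for every $n\ge0$. *)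

theory Defs
  imports Main "HOL-Library.Function_Algebras" "HOL-Number_Theory.Cong"
begin

text \<open>A k x l matrix over a commutative ring 'a is represented as a function
  A :: nat => nat => 'a, where only the entries A i j with i < k and j < l matter.  Vectors x in R^l are functions
  nat => 'a of which only the entries x j with j < l matter.\<close>

definition partition_regular :: "nat \<Rightarrow> nat \<Rightarrow> (nat \<Rightarrow> nat \<Rightarrow> 'a::comm_ring_1) \<Rightarrow> bool" where
  "partition_regular k l A \<longleftrightarrow>
     (\<forall>r::nat. r \<ge> 1 \<longrightarrow> (\<forall>\<chi>::'a \<Rightarrow> nat. (\<forall>a. \<chi> a \<in> {1..r}) \<longrightarrow>
        (\<exists>x::nat \<Rightarrow> 'a. (\<exists>j<l. x j \<noteq> 0) \<and>
            (\<forall>i<k. (\<Sum>j<l. A i j * x j) = 0) \<and>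
            (\<exists>c. \<forall>j<l. \<chi> (x j) = c))))"

text \<open>The partition {0..<l} = I_0 \<union> ... \<union> I_m into
  (nonempty, pairwise disjoint) parts is given by a surjection f from {0..<l} onto {0..m},
  with I_t = {j. j < l \<and> f j = t}.\<close>

definition gen_columns_condition :: "nat \<Rightarrow> nat \<Rightarrow> (nat \<Rightarrow> nat \<Rightarrow> 'a::comm_ring_1) \<Rightarrow> bool" where
  "gen_columns_condition k l A \<longleftrightarrow>
     (\<exists>(m::nat) (f::nat \<Rightarrow> nat) (d::nat \<Rightarrow> 'a).
        f ` {..<l} = {..m} \<and>
        (\<forall>t\<le>m. d t \<noteq> 0) \<and>
        (\<forall>i<k. d 0 * (\<Sum>j\<in>{j. j < l \<and> f j = 0}. A i j) = 0) \<and>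
        (\<forall>t\<in>{1..m}. \<exists>y::nat \<Rightarrow> 'a.
            \<forall>i<k. d t * (\<Sum>j\<in>{j. j < l \<and> f j = t}. A i j)
                   = (\<Sum>j\<in>{j. j < l \<and> f j < t}. y j * A i j)) \<and>
        (m > 0 \<longrightarrow> (\<forall>e::nat. infinite (range (\<lambda>r::'a. d 0 * (\<Prod>t\<in>{1..m}. d t) ^ e * r)))))"

end

theory Submission
  imports Defs "HOL-Number_Theory.Number_Theory" "HOL-Library.Ramsey" "HOL-Library.Infinite_Set"
begin

lemma bez: "coprime (u::int) q \<Longrightarrow> \<exists>a b. a*u + b*q = 1"
  using bezout_int[of u q] by (simp add: coprime_iff_gcd_eq_1)
lemma ofint_fun_apply: "(of_int k :: 'a \<Rightarrow> 'b::ring_1) x = of_int k"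
  by (cases k rule: int_cases) (simp_all add: fun_Compl_def)

definition matA :: "int \<Rightarrow> int \<Rightarrow> nat \<Rightarrow> nat \<Rightarrow> 'a::comm_ring_1" where
  "matA c q i j = of_int (if i = 0 then (if j = 0 then 1 else if j = 1 then -1 else c)
                          else (if j = 2 then q else 0))"

lemma matA_simps [simp]:
  "matA c q 0 0 = 1" "matA c q 0 (Suc 0) = -1" "matA c q 0 2 = of_int c"
  "matA c q (Suc 0) 0 = 0" "matA c q (Suc 0) (Suc 0) = 0" "matA c q (Suc 0) 2 = of_int q"
  "matA c q 0 1 = -1" "matA c q 1 0 = 0" "matA c q 1 1 = 0" "matA c q 1 2 = of_int q"
  by (simp_all add: matA_def)

lemma sum3:
  fixes F :: "nat \<Rightarrow> 'a::comm_monoid_add"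
  shows "(\<Sum>j\<in>{j. j < 3 \<and> P j}. F j) =
     (if P 0 then F 0 else 0) + (if P 1 then F 1 else 0) + (if P 2 then F 2 else 0)"
proof -
  have "{j. j < 3 \<and> P j} = {j \<in> {..<3}. P j}" by auto
  hence "(\<Sum>j\<in>{j. j < 3 \<and> P j}. F j) = (\<Sum>j<3. if P j then F j else 0)"
    by (simp add: sum.inter_filter[symmetric])
  also have "\<dots> = (if P 0 then F 0 else 0) + (if P 1 then F 1 else 0) + (if P 2 then F 2 else 0)"
    by (simp add: eval_nat_numeral add.assoc)
  finally show ?thesis .
qed

lemma kill:
  fixes d :: "'a::comm_ring_1"
  assumes "d * of_int u = 0" "d * of_int q = 0" "coprime u q"
  shows "d = 0"
proof -
  obtain a b where ab: "a*u + b*q = 1" using bez[OF assms(3)] by blast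
  have "d = d * of_int (a*u + b*q)" using ab by simp
  also have "\<dots> = of_int a * (d * of_int u) + of_int b * (d * of_int q)" by (simp add: algebra_simps)
  also have "\<dots> = 0" using assms by simp
  finally show ?thesis .
qed

lemma cop_p:
  fixes p :: nat
  assumes "prime p" "\<not> int p dvd u"
  shows "coprime u (int p)"
  using assms by (metis coprime_commute prime_imp_coprime prime_nat_int_transfer)


lemma exists_g:
  fixes p :: nat
  assumes p: "prime p" "p \<ge> 5"
  shows "\<exists>(g::int) (m::nat). m \<ge> 1 \<and> (int p) dvd (g ^ m + 1) \<and> \<not> int p dvd g
          \<and> \<not> int p dvd (g - 1) \<and> \<not> int p dvd (g + 1)"
proof -
  obtain g0 where g0: "residue_primroot p g0" using prime_primitive_root_exists[of p] p prime_gt_1_nat by blast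
  have cop: "coprime p g0" and ordg: "ord p g0 = p - 1"
    using g0 p(1) by (auto simp: residue_primroot_def totient_prime)
  define m where "m = (p - 1) div 2"
  have oddp: "odd p" using p prime_odd_nat[of p] by auto
  have m2: "2 * m = p - 1" using oddp unfolding m_def by simp
  have m1: "m \<ge> 1" using p unfolding m_def by auto
  have "[g0 ^ (p - 1) = 1] (mod p)" using ord_works[of g0 p] ordg by simp
  hence "[int g0 ^ (2*m) = 1] (mod int p)" using m2
    by (metis cong_int_iff of_nat_1 of_nat_power)
  hence "int p dvd (int g0 ^ m - 1) * (int g0 ^ m + 1)"
    by (simp add: cong_iff_dvd_diff mult.commute power2_eq_square power_mult
    square_diff_one_factored)
  hence "int p dvd (int g0 ^ m - 1) \<or> int p dvd (int g0 ^ m + 1)"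
    using p(1) by (simp add: prime_dvd_mult_iff)
  moreover have "\<not> int p dvd (int g0 ^ m - 1)"
  proof
    assume "int p dvd (int g0 ^ m - 1)"
    hence "[int g0 ^ m = 1] (mod int p)" by (simp add: cong_iff_dvd_diff)
    hence "[g0 ^ m = 1] (mod p)" by (metis cong_int_iff of_nat_1 of_nat_power)
    hence "(p - 1) dvd m" using ord_divides[of g0 m p] ordg by simp
    hence "p - 1 \<le> m" using m1 by (simp add: dvd_imp_le)
    thus False using m1 m2 by linarith
  qed
  ultimately have A: "int p dvd (int g0 ^ m + 1)" by blast
  have B: "\<not> int p dvd int g0"
  proof
    assume "int p dvd int g0"
    hence "p dvd g0" by simp
    hence "p dvd gcd p g0" by simp
    thus False using cop p(1) by (simp add: prime_gt_1_nat)
  qed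
  have C: "\<not> int p dvd (int g0 - 1)"
  proof
    assume "int p dvd (int g0 - 1)"
    hence "[int g0 ^ 1 = 1] (mod int p)" by (simp add: cong_iff_dvd_diff)
    hence "[g0 ^ 1 = 1] (mod p)" by (metis cong_int_iff of_nat_1 of_nat_power)
    hence "(p - 1) dvd 1" using ord_divides[of g0 1 p] ordg by simp
    thus False using p by simp
  qed
  have D: "\<not> int p dvd (int g0 + 1)"
  proof
    assume "int p dvd (int g0 + 1)"
    hence "int p dvd (int g0 + 1) * (int g0 - 1)" by simp
    hence "[int g0 ^ 2 = 1] (mod int p)" by (simp add: cong_iff_dvd_diff power2_eq_square algebra_simps)
    hence "[g0 ^ 2 = 1] (mod p)" by (metis cong_int_iff of_nat_1 of_nat_power)
    hence "(p - 1) dvd 2" using ord_divides[of g0 2 p] ordg by simp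
    hence "p - 1 \<le> 2" by (simp add: dvd_imp_le)
    thus False using p by simp
  qed
  show ?thesis using A B C D m1 by blast
qed

lemma notgcc:
  fixes n p :: nat and g :: int
  assumes n: "n > 0" and p: "prime p"
    and surj: "surj (of_int :: int \<Rightarrow> 'm::comm_ring_1)"
    and cg: "\<forall>x y::int. ((of_int x :: 'm) = of_int y) \<longleftrightarrow> [x = y] (mod int (n * p ^ 2))"
    and g1: "\<not> int p dvd g" and g2: "\<not> int p dvd (g - 1)" and g3: "\<not> int p dvd (g + 1)"
  shows "\<not> gen_columns_condition 2 3 (matA (-g) (int p) :: nat \<Rightarrow> nat \<Rightarrow> ('i \<Rightarrow> 'm))"
proof
  let ?A = "matA (-g) (int p) :: nat \<Rightarrow> nat \<Rightarrow> ('i \<Rightarrow> 'm)"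
  assume "gen_columns_condition 2 3 ?A"
  then obtain M :: nat and f :: "nat \<Rightarrow> nat" and d :: "nat \<Rightarrow> ('i \<Rightarrow> 'm)" where img: "f ` {..<3} = {..M}" and dnz: "\<forall>t\<le>M. d t \<noteq> 0"
    and H0: "\<forall>i<2. d 0 * (\<Sum>j\<in>{j. j < 3 \<and> f j = 0}. ?A i j) = 0"
    and H1: "\<forall>t\<in>{1..M}. \<exists>y::nat \<Rightarrow> ('i\<Rightarrow>'m). \<forall>i<2. d t * (\<Sum>j\<in>{j. j < 3 \<and> f j = t}. ?A i j)
                   = (\<Sum>j\<in>{j. j < 3 \<and> f j < t}. y j * ?A i j)"
    and H3: "M > 0 \<longrightarrow> (\<forall>e::nat. infinite (range (\<lambda>r. d 0 * (\<Prod>t\<in>{1..M}. d t) ^ e * r)))"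
    unfolding gen_columns_condition_def apply (elim exE conjE)
    apply (rule that)
    apply assumption+
    done
  have d0: "d 0 \<noteq> 0" using dnz by simp
  have r0: "d 0 * ((if f 0 = 0 then 1 else 0) + (if f 1 = 0 then -1 else 0) + (if f 2 = 0 then - of_int g else 0)) = 0"
  proof -
    have "d 0 * (\<Sum>j\<in>{j. j < 3 \<and> f j = 0}. ?A 0 j) = 0" using H0 by simp
    thus ?thesis unfolding sum3 by (simp only: matA_simps of_int_minus)
  qed
  have r1: "d 0 * (if f 2 = 0 then of_int (int p) else 0) = 0"
  proof -
    have "d 0 * (\<Sum>j\<in>{j. j < 3 \<and> f j = 0}. ?A 1 j) = 0" using H0 by simp
    thus ?thesis unfolding sum3 by (simp only: matA_simps if_cancel add_0_left)
  qed
  have fle: "f j \<le> M" if "j < 3" for j using img that by auto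
  have "0 \<in> f ` {..<3}" using img by auto
  then obtain j0 where j0: "j0 < 3" "f j0 = 0" by auto
  have "M \<in> f ` {..<3}" using img by auto
  then obtain jM where jM: "jM < 3" "f jM = M" by auto
  show False
  proof (cases "f 2 = 0")
    case True
    hence dp: "d 0 * of_int (int p) = 0" using r1 by simp
    show False
    proof (cases "f 0 = 0")
      case f0: True
      show False
      proof (cases "f 1 = 0")
        case True
        hence "d 0 * of_int (- g) = 0" using r0 f0 \<open>f 2 = 0\<close> by simp
        thus False using kill[OF _ dp] cop_p[OF p] g1 d0 by (metis dvd_minus_iff)
      next
        case False
        hence "d 0 * of_int (1 - g) = 0" using r0 f0 \<open>f 2 = 0\<close> by simp
        moreover have "\<not> int p dvd (1 - g)" using g2 by (metis dvd_minus_iff minus_diff_eq)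
        ultimately show False using kill[OF _ dp] cop_p[OF p] d0 by metis
      qed
    next
      case f0: False
      show False
      proof (cases "f 1 = 0")
        case True
        hence "d 0 * of_int (- (g + 1)) = 0" using r0 f0 \<open>f 2 = 0\<close> by (simp add: algebra_simps)
        moreover have "\<not> int p dvd (- (g + 1))" using g3 by (metis dvd_minus_iff)
        ultimately show False using kill[OF _ dp] cop_p[OF p] d0 by metis
      next
        case False
        hence "d 0 * of_int (- g) = 0" using r0 f0 \<open>f 2 = 0\<close> by simp
        thus False using kill[OF _ dp] cop_p[OF p] g1 d0 by (metis dvd_minus_iff)
      qed
    qed
  next
    case f2: False
    show False
    proof (cases "f 0 = 0")
      case f0: False
      show False
      proof (cases "f 1 = 0")
        case True
        thus False using r0 f0 f2 d0 by simp
      next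
        case False
        thus False using j0 f0 f2 by (auto simp: eval_nat_numeral less_Suc_eq)
      qed
    next
      case f0: True
      show False
      proof (cases "f 1 = 0")
        case False
        thus False using r0 f0 f2 d0 by simp
      next
        case f1: True
        have "M = f 2" using jM f0 f1 f2 fle[of 2]
          by (auto simp: eval_nat_numeral less_Suc_eq)
        have "1 \<in> f ` {..<3}" using img \<open>M = f 2\<close> f2 by auto
        then obtain j1 where "j1 < 3" "f j1 = 1" by auto
        hence f21: "f 2 = 1" using f0 f1 by (auto simp: eval_nat_numeral less_Suc_eq)
        hence M1: "M = 1" using \<open>M = f 2\<close> by simp
        obtain y :: "nat \<Rightarrow> ('i\<Rightarrow>'m)" where Y: "\<forall>i<2. d 1 * (\<Sum>j\<in>{j. j < 3 \<and> f j = 1}. ?A i j)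
                   = (\<Sum>j\<in>{j. j < 3 \<and> f j < 1}. y j * ?A i j)"
          using H1 M1 by auto
        have d1p: "d 1 * of_int (int p) = 0"
        proof -
          have "d 1 * (\<Sum>j\<in>{j. j < 3 \<and> f j = 1}. ?A 1 j) = (\<Sum>j\<in>{j. j < 3 \<and> f j < 1}. y j * ?A 1 j)"
            using Y by simp
          thus ?thesis unfolding sum3 using f0 f1 f21 by (simp only: matA_simps) simp
        qed
        have sq: "d 1 * d 1 = 0"
        proof
          fix a
          have "(d 1 * of_int (int p)) a = 0" using d1p by simp
          hence ha: "d 1 a * of_int (int p) = 0" by (simp add: ofint_fun_apply)
          obtain k where k: "d 1 a = of_int k" using surj by (metis surj_def)
          have "(of_int (k * int p) :: 'm) = of_int 0" using ha k by simp
          hence "[k * int p = 0] (mod int (n * p ^ 2))" using cg by blast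
          hence "int n * int p * int p dvd k * int p" by (simp add: cong_0_iff power2_eq_square mult.assoc)
          hence "int n * int p dvd k" using p prime_gt_0_nat[OF p] by (simp add: mult_dvd_mono)
          then obtain j where "k = int n * int p * j" by (auto elim: dvdE)
          hence "k * k = int (n * p ^ 2) * (int n * j * j)" by (simp add: power2_eq_square algebra_simps)
          hence "[k * k = 0] (mod int (n * p ^ 2))" by (simp add: cong_0_iff)
          hence "(of_int (k * k) :: 'm) = of_int 0" using cg by blast
          thus "(d 1 * d 1) a = 0 a" using k by simp
        qed
        have "infinite (range (\<lambda>r. d 0 * (\<Prod>t\<in>{1..M}. d t) ^ 2 * r))" using H3 M1 by simp
        moreover have "(\<lambda>r. d 0 * (\<Prod>t\<in>{1..M}. d t) ^ 2 * r) = (\<lambda>r. 0)"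
          using M1 sq by (simp add: power2_eq_square)
        ultimately show False by simp
      qed
    qed
  qed
qed


lemma row0_val:
  fixes m k n p :: nat and g :: int and w :: "nat \<Rightarrow> 'm::comm_ring_1"
  assumes m1: "m \<ge> 1" and w: "\<And>j. w j = of_int (int n * int p * g ^ j)"
    and z: "\<And>x. (of_int x :: 'm) = 0 \<longleftrightarrow> int (n*p^2) dvd x" and gm: "int p dvd (g^m + 1)"
  shows "(if k \<in> {..m} \<union> {2*m<..<3*m} then w (card {j\<in>{..m} \<union> {2*m<..<3*m}. j<k}) else 0)
       - (if k \<in> insert 0 {m<..<3*m} then w (card {j\<in>insert 0 {m<..<3*m}. j<k}) else 0)
       + of_int (-g) * (if k \<in> {1..2*m} then w (card {j\<in>{1..2*m}. j<k}) else 0) = 0"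
proof -
  consider "k = 0" | "1 \<le> k \<and> k \<le> m" | "m < k \<and> k \<le> 2*m" | "2*m < k \<and> k < 3*m" | "3*m \<le> k"
    by linarith
  thus ?thesis
  proof cases
    case 1
    thus ?thesis by simp
  next
    case 2
    have s1: "{j\<in>{..m} \<union> {2*m<..<3*m}. j<k} = {..<k}" using 2 by auto
    have s3: "{j\<in>{1..2*m}. j<k} = {1..<k}" using 2 by auto
    have i1: "k \<in> {..m} \<union> {2*m<..<3*m}" using 2 by auto
    have i2: "k \<notin> insert 0 {m<..<3*m}" using 2 by auto
    have i3: "k \<in> {1..2*m}" using 2 by auto
    have gk: "g ^ k = g * g ^ (k - 1)" using 2 by (cases k) auto
    have "w k + of_int (-g) * w (k - 1) = of_int (int n * int p * g ^ k - int n * int p * (g * g ^ (k - 1)))"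
      by (simp add: w algebra_simps)
    also have "\<dots> = 0" using gk by simp
    finally show ?thesis using s1 s3 i1 i2 i3 by simp
  next
    case 3
    have s2: "{j\<in>insert 0 {m<..<3*m}. j<k} = insert 0 {m<..<k}" using 3 by auto
    have s3: "{j\<in>{1..2*m}. j<k} = {1..<k}" using 3 by auto
    have c2: "card (insert 0 {m<..<k}) = k - m" using 3 m1 by (simp add: Suc_diff_Suc)
    have i1: "k \<notin> {..m} \<union> {2*m<..<3*m}" using 3 by auto
    have i2: "k \<in> insert 0 {m<..<3*m}" using 3 by auto
    have i3: "k \<in> {1..2*m}" using 3 m1 by auto
    have gk1: "g * g ^ (k - 1) = g ^ k" using 3 by (cases k) auto
    have gk2: "g ^ k = g ^ (k - m) * g ^ m" using 3 by (simp add: power_add[symmetric])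
    have gk: "g * g ^ (k - 1) = g ^ (k - m) * g ^ m" using gk1 gk2 by simp
    obtain t where t: "g ^ m + 1 = int p * t" using gm by (auto elim: dvdE)
    have "- w (k - m) + of_int (-g) * w (k - 1) = of_int (- (int n * int p * g ^ (k - m) + int n * int p * (g * g ^ (k - 1))))"
      by (simp add: w algebra_simps)
    also have "- (int n * int p * g ^ (k - m) + int n * int p * (g * g ^ (k - 1)))
        = - (int n * int p * g ^ (k - m) * (g ^ m + 1))" using gk by (simp add: algebra_simps)
    also have "\<dots> = int (n * p ^ 2) * (- (g ^ (k - m) * t))" using t by (simp add: power2_eq_square algebra_simps)
    also have "(of_int \<dots> :: 'm) = 0" by (rule iffD2[OF z]) simp
    finally show ?thesis using s2 s3 c2 i1 i2 i3 by simp
  next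
    case 4
    have s1: "{j\<in>{..m} \<union> {2*m<..<3*m}. j<k} = {..m} \<union> {2*m<..<k}" using 4 by auto
    have s2: "{j\<in>insert 0 {m<..<3*m}. j<k} = insert 0 {m<..<k}" using 4 by auto
    have c1: "card ({..m} \<union> {2*m<..<k}) = k - m" using 4 m1 by (subst card_Un_disjoint) auto
    have c2: "card (insert 0 {m<..<k}) = k - m" using 4 m1 by (simp add: Suc_diff_Suc)
    have i1: "k \<in> {..m} \<union> {2*m<..<3*m}" using 4 by auto
    have i2: "k \<in> insert 0 {m<..<3*m}" using 4 by auto
    have i3: "k \<notin> {1..2*m}" using 4 by auto
    show ?thesis using s1 s2 c1 c2 i1 i2 i3 by simp
  next
    case 5
    have i1: "k \<notin> {..m} \<union> {2*m<..<3*m}" using 5 m1 by auto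
    have i2: "k \<notin> insert 0 {m<..<3*m}" using 5 m1 by auto
    have i3: "k \<notin> {1..2*m}" using 5 m1 by auto
    show ?thesis using i1 i2 i3 by simp
  qed
qed


lemma sum_lt3: "(\<Sum>j<(3::nat). F j) = F 0 + F 1 + (F 2 :: 'a::comm_monoid_add)"
  by (simp add: eval_nat_numeral add.assoc)

lemma pr:
  fixes n p m :: nat and g :: int
  assumes n: "n > 0" and p: "prime p" and m1: "m \<ge> 1"
    and inf: "infinite (UNIV :: 'i set)"
    and cg: "\<forall>x y::int. ((of_int x :: 'm::comm_ring_1) = of_int y) \<longleftrightarrow> [x = y] (mod int (n * p ^ 2))"
    and gm: "int p dvd (g ^ m + 1)"
  shows "partition_regular 2 3 (matA (-g) (int p) :: nat \<Rightarrow> nat \<Rightarrow> ('i \<Rightarrow> 'm))"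
proof -
  have z: "\<And>x. (of_int x :: 'm) = 0 \<longleftrightarrow> int (n*p^2) dvd x"
    using cg by (metis cong_0_iff of_int_0)
  obtain e :: "nat \<Rightarrow> 'i" where e: "inj e" using infinite_countable_subset[OF inf] by blast
  define w :: "nat \<Rightarrow> 'm" where "w j = of_int (int n * int p * g ^ j)" for j
  define place :: "nat set \<Rightarrow> 'i \<Rightarrow> 'm" where
    "place X = (\<lambda>a. if a \<in> e ` X then w (card {k\<in>X. k < inv_into UNIV e a}) else 0)" for X
  define L where "L = 2*m"
  define Px :: "nat set" where "Px = {..m} \<union> {2*m<..<3*m}"
  define Py :: "nat set" where "Py = insert 0 {m<..<3*m}"
  define Pz :: "nat set" where "Pz = {1..2*m}"
  have cPx: "card Px = L" unfolding Px_def L_def using m1 by (subst card_Un_disjoint) auto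
  have cPy: "card Py = L" unfolding Py_def L_def using m1 by (simp add: Suc_diff_Suc)
  have cPz: "card Pz = L" unfolding Pz_def L_def by simp
  have fin: "finite Px" "finite Py" "finite Pz" unfolding Px_def Py_def Pz_def by auto
  have pw: "of_int (int p) * w j = 0" for j
  proof -
    have "of_int (int p) * w j = of_int (int (n * p^2) * g ^ j)" by (simp add: w_def power2_eq_square algebra_simps)
    also have "\<dots> = 0" by (rule iffD2[OF z]) simp
    finally show ?thesis .
  qed
  have w0: "w 0 \<noteq> 0"
  proof
    assume "w 0 = 0"
    hence "(of_int (int n * int p) :: 'm) = 0" by (simp add: w_def)
    hence "int (n*p^2) dvd int n * int p" by (rule iffD1[OF z])
    hence "int n * int p * int p dvd int n * int p * 1" by (simp add: power2_eq_square algebra_simps)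
    hence "int p dvd 1" using n p prime_gt_0_nat[OF p] by (subst (asm) dvd_mult_cancel_left) auto
    thus False using p by (simp add: prime_gt_1_nat)
  qed
  show ?thesis unfolding partition_regular_def
  proof (intro allI impI)
    fix r :: nat and \<chi> :: "('i \<Rightarrow> 'm) \<Rightarrow> nat"
    assume r: "r \<ge> 1" and chi: "\<forall>a. \<chi> a \<in> {1..r}"
    have "\<forall>X. X \<subseteq> UNIV \<and> finite X \<and> card X = L \<longrightarrow> \<chi> (place X) - 1 < r"
      using chi r by (metis atLeastAtMost_iff diff_less le_less_trans zero_less_one less_le_trans) 
    then obtain Y t where Y: "infinite Y" "t < r" "\<forall>X. X \<subseteq> Y \<and> finite X \<and> card X = L \<longrightarrow> \<chi> (place X) - 1 = t"
      using Ramsey[of "UNIV::nat set" L "\<lambda>X. \<chi> (place X) - 1" r] by auto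
    obtain h :: "nat \<Rightarrow> nat" where h: "strict_mono h" "\<And>k. h k \<in> Y"
      using infinite_enumerate[OF Y(1)] by blast
    have inj_h: "inj h" using h(1) by (rule strict_mono_imp_inj_on)
    have col: "\<chi> (place (h ` P)) = Suc t" if "finite P" "card P = L" for P
    proof -
      have "h ` P \<subseteq> Y" using h by auto
      moreover have "card (h ` P) = L" using that inj_h by (simp add: card_image inj_on_subset)
      ultimately have "\<chi> (place (h ` P)) - 1 = t" using Y(3) that by auto
      moreover have "\<chi> (place (h ` P)) \<ge> 1" using chi by auto
      ultimately show ?thesis by simp
    qed
    have ph: "place (h ` P) (e (h k)) = (if k \<in> P then w (card {j\<in>P. j<k}) else 0)" for P k
    proof -
      have mem: "e (h k) \<in> e ` h ` P \<longleftrightarrow> k \<in> P" using e inj_h by (simp add: inj_image_mem_iff)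
      have iv: "inv_into UNIV e (e (h k)) = h k" using e by (simp add: inv_into_f_f)
      have "{k' \<in> h ` P. k' < h k} = h ` {j\<in>P. j<k}" using strict_mono_less[OF h(1)] by auto
      hence "card {k' \<in> h ` P. k' < h k} = card {j\<in>P. j<k}" using inj_h by (simp add: card_image inj_on_subset)
      thus ?thesis unfolding place_def using mem iv by simp
    qed
    have pout: "place (h ` P) a = 0" if "a \<notin> range (\<lambda>k. e (h k))" for P a
      using that unfolding place_def by auto
    have pval: "place X a = 0 \<or> (\<exists>j. place X a = w j)" for X a unfolding place_def by auto
    define x :: "nat \<Rightarrow> ('i \<Rightarrow> 'm)" where
      "x j = (if j = 0 then place (h ` Px) else if j = 1 then place (h ` Py) else place (h ` Pz))" for j
    show "\<exists>x. (\<exists>j<3. x j \<noteq> 0) \<and> (\<forall>i<2. (\<Sum>j<3. matA (-g) (int p) i j * x j) = 0)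
              \<and> (\<exists>c. \<forall>j<3. \<chi> (x j) = c)"
    proof (rule exI[of _ x], intro conjI)
      have "x 0 (e (h 0)) = w 0" unfolding x_def using ph[of Px 0] by (simp add: Px_def)
      hence "x 0 \<noteq> 0" using w0 by auto
      thus "\<exists>j<3. x j \<noteq> 0" by auto
      have "\<forall>j<3. \<chi> (x j) = Suc t"
        using col fin cPx cPy cPz by (auto simp: x_def eval_nat_numeral less_Suc_eq)
      thus "\<exists>c. \<forall>j<3. \<chi> (x j) = c" by blast
      have row0: "x 0 - x 1 + of_int (-g) * x 2 = 0"
      proof
        fix a
        show "(x 0 - x 1 + of_int (-g) * x 2) a = 0 a"
        proof (cases "a \<in> range (\<lambda>k. e (h k))")
          case True
          then obtain k where a: "a = e (h k)" by auto
          have e1: "x 0 a = (if k \<in> Px then w (card {j\<in>Px. j<k}) else 0)"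
            unfolding x_def a by (simp add: ph)
          have e2: "x 1 a = (if k \<in> Py then w (card {j\<in>Py. j<k}) else 0)"
            unfolding x_def a by (simp add: ph)
          have e3: "x 2 a = (if k \<in> Pz then w (card {j\<in>Pz. j<k}) else 0)"
            unfolding x_def a by (simp add: ph)
          have rv: "(if k \<in> Px then w (card {j\<in>Px. j<k}) else 0)
              - (if k \<in> Py then w (card {j\<in>Py. j<k}) else 0)
              + of_int (-g) * (if k \<in> Pz then w (card {j\<in>Pz. j<k}) else 0) = 0"
            using row0_val[OF m1 w_def z gm, of k] unfolding Px_def Py_def Pz_def .
          have "(x 0 - x 1 + of_int (-g) * x 2) a = x 0 a - x 1 a + of_int (-g) * x 2 a"
            by (simp add: ofint_fun_apply)
          also have "\<dots> = 0" unfolding e1 e2 e3 by (rule rv)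
          finally show ?thesis by simp
        next
          case False
          thus ?thesis unfolding x_def by (simp add: pout ofint_fun_apply)
        qed
      qed
      have row1: "of_int (int p) * x 2 = 0"
      proof
        fix a
        show "(of_int (int p) * x 2) a = 0 a"
          using pval[of "h ` Pz" a] pw by (auto simp: x_def ofint_fun_apply)
      qed
      show "\<forall>i<2. (\<Sum>j<3. matA (-g) (int p) i j * x j) = 0"
      proof (intro allI impI)
        fix i :: nat assume "i < 2"
        hence "i = 0 \<or> i = 1" by auto
        thus "(\<Sum>j<3. matA (-g) (int p) i j * x j) = 0"
          using row0 row1 unfolding sum_lt3 by (auto simp: algebra_simps)
      qed
    qed
  qed
qed

theorem corollary4p8:
  fixes n p :: nat
  assumes "n > 0" and "prime p" and "p \<ge> 5"
    and "infinite (UNIV :: 'i set)"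
    and "surj (of_int :: int \<Rightarrow> 'm::comm_ring_1)"
    and "\<forall>x y::int. ((of_int x :: 'm) = of_int y) \<longleftrightarrow> [x = y] (mod int (n * p ^ 2))"
  shows "\<exists>A :: nat \<Rightarrow> nat \<Rightarrow> ('i \<Rightarrow> 'm).
           partition_regular 2 3 A \<and> \<not> gen_columns_condition 2 3 A"
proof -
  obtain g :: int and m :: nat where gm: "m \<ge> 1" "int p dvd g ^ m + 1" "\<not> int p dvd g"
    "\<not> int p dvd (g - 1)" "\<not> int p dvd (g + 1)"
    using exists_g[OF assms(2,3)] by blast
  have "partition_regular 2 3 (matA (-g) (int p) :: nat \<Rightarrow> nat \<Rightarrow> ('i \<Rightarrow> 'm))"
    using pr[OF assms(1,2) gm(1) assms(4) assms(6) gm(2)] .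
  moreover have "\<not> gen_columns_condition 2 3 (matA (-g) (int p) :: nat \<Rightarrow> nat \<Rightarrow> ('i \<Rightarrow> 'm))"
    using notgcc[OF assms(1,2,5,6) gm(3,4,5)] .
  ultimately show ?thesis by blast
qed

end
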